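(* There is a constant $C$ such that for every complex $M\times N$ matrix $A=(a_{jk})$, $$h(A)\le C\sup_{1\le j\le M}\sum_{k=0}^N|a_{jk}-a_{j,k+1}|,$$ where one sets $a_{j0}=a_{j,N+1}=0$ for all $1\le j\le M$.
   Context: Let $(\Omega,\Sigma,\mathbb P)$ be a probability space with a dyadic filtration $(\Sigma_k)_{k\ge0}$ (increasing sub-$\sigma$-algebras, each $\Sigma_k$ atomic with exactly $2^k$ atoms of probability $2^{-k}$); $\mathcal E_kf=\mathbb E(f\mid\Sigma_k)$, $\Delta_kf=\mathcal E_kf-\mathcal E_{k-1}f$ ($k\ge1$). For a complex $M\times N$ matrix $A=(a_{jk})$, $h(A)$ is the least constant such that $\big\|\max_{1\le j\le M}|\sum_{k=1}^N a_{jk}\Delta_kf|\big\|_{L_2}\le h(A)\|f\|_{L_2}$ for all $f\in L_2(\Omega)$; it does not depend on the choice of probability space and dyadic filtration. *)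

theory Defs
  imports "HOL-Analysis.Analysis"
begin

text \<open>Concrete model of a probability space with dyadic filtration:
  \<Omega> = [0,1) with Lebesgue measure, \<Sigma>_k generated by the 2^k dyadic intervals
  of length 2^-k.  (By the paper, h(A) does not depend on this choice.)\<close>

definition dyadic_interval :: "nat \<Rightarrow> real \<Rightarrow> real set" where
  "dyadic_interval k x =
     {of_int \<lfloor>2^k * x\<rfloor> / 2^k ..< (of_int \<lfloor>2^k * x\<rfloor> + 1) / 2^k}"

definition dyadic_cond_exp :: "nat \<Rightarrow> (real \<Rightarrow> complex) \<Rightarrow> real \<Rightarrow> complex" where
  "dyadic_cond_exp k f x = (2 ^ k) * (LINT t : dyadic_interval k x | lborel. f t)"

definition dyadic_diff :: "nat \<Rightarrow> (real \<Rightarrow> complex) \<Rightarrow> real \<Rightarrow> complex" where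
  "dyadic_diff k f x = dyadic_cond_exp k f x - dyadic_cond_exp (k - 1) f x"

definition L2sq :: "(real \<Rightarrow> complex) \<Rightarrow> ennreal" where
  "L2sq f = (\<integral>\<^sup>+ x \<in> {0..<1}. ennreal ((cmod (f x))\<^sup>2) \<partial>lborel)"

definition in_L2 :: "(real \<Rightarrow> complex) \<Rightarrow> bool" where
  "in_L2 f \<longleftrightarrow> f \<in> borel_measurable lborel \<and> L2sq f < \<infinity>"

definition max_transform ::
  "nat \<Rightarrow> nat \<Rightarrow> (nat \<Rightarrow> nat \<Rightarrow> complex) \<Rightarrow> (real \<Rightarrow> complex) \<Rightarrow> real \<Rightarrow> real" where
  "max_transform M N a f x = (MAX j \<in> {1..M}. cmod (\<Sum>k = 1..N. a j k * dyadic_diff k f x))"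

text \<open>h(A): the least constant c \<ge> 0 with \<parallel>max_j |\<dots>|\<parallel>_2 \<le> c \<parallel>f\<parallel>_2 for all f \<in> L2
  (inequality written in squared form); \<infinity> if no such constant exists.\<close>
definition h_const :: "nat \<Rightarrow> nat \<Rightarrow> (nat \<Rightarrow> nat \<Rightarrow> complex) \<Rightarrow> ereal" where
  "h_const M N a = Inf {ereal c | c. c \<ge> 0 \<and>
     (\<forall>f. in_L2 f \<longrightarrow>
        L2sq (\<lambda>x. complex_of_real (max_transform M N a f x)) \<le> ennreal (c\<^sup>2) * L2sq f)}"

definition ext_entry :: "nat \<Rightarrow> (nat \<Rightarrow> nat \<Rightarrow> complex) \<Rightarrow> nat \<Rightarrow> nat \<Rightarrow> complex" where
  "ext_entry N a j k = (if 1 \<le> k \<and> k \<le> N then a j k else 0)"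

end

theory Submission
  imports Defs
begin


primrec runmax :: "(nat \<Rightarrow> real) \<Rightarrow> nat \<Rightarrow> real" where
  "runmax x 0 = x 0"
| "runmax x (Suc n) = max (runmax x n) (x (Suc n))"

lemma runmax_ge: "k \<le> n \<Longrightarrow> x k \<le> runmax x n"
proof (induction n)
  case 0 then show ?case by simp
next
  case (Suc n) then show ?case by (cases "k = Suc n") auto
qed

lemma runmax_cong: "(\<And>m. m \<le> n \<Longrightarrow> x m = x' m) \<Longrightarrow> runmax x n = runmax x' n"
  by (induction n) auto

lemma runmax_D:
  "(runmax x n)^2 / 2 \<le> runmax x n * x n - (\<Sum>k<n. runmax x k * (x (Suc k) - x k))"
proof (induction n)
  case 0 then show ?case by (simp add: power2_eq_square)
next
  case (Suc n)
  define h where "h = runmax x n"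
  define S where "S = (\<Sum>k<n. runmax x k * (x (Suc k) - x k))"
  have IH: "h^2/2 \<le> h * x n - S" using Suc by (simp add: h_def S_def)
  have key: "(max h (x (Suc n)))^2/2 - h^2/2 \<le> max h (x (Suc n)) * x (Suc n) - h * x (Suc n)"
  proof (cases "h \<le> x (Suc n)")
    case True
    have "0 \<le> (x (Suc n) - h)^2/2" by simp
    then show ?thesis using True by (simp add: max_def power2_eq_square algebra_simps)
  next
    case False then show ?thesis by (simp add: max_def)
  qed
  have "(\<Sum>k<Suc n. runmax x k * (x (Suc k) - x k)) = S + h * (x (Suc n) - x n)"
    by (simp add: S_def h_def)
  then show ?case using IH key by (simp add: h_def[symmetric] algebra_simps)
qed

lemma runmax_pathwise:
  "(runmax x n)^2 \<le> 4 * (x n)^2 - 4 * (\<Sum>k<n. runmax x k * (x (Suc k) - x k))"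
proof -
  have a: "(runmax x n)^2 / 2 \<le> runmax x n * x n - (\<Sum>k<n. runmax x k * (x (Suc k) - x k))"
    by (rule runmax_D)
  have b: "0 \<le> (runmax x n / 2 - x n)^2" by simp
  show ?thesis using a b by (simp add: power2_eq_square algebra_simps)
qed

lemma sum_div_block:
  assumes "0 < b"
  shows "(\<Sum>i<a*b. g (i div b)) = of_nat b * (\<Sum>p<a. g p :: real)"
proof (induction a)
  case 0 then show ?case by simp
next
  case (Suc a)
  have "{..<Suc a * b} = {..<a*b} \<union> {a*b..<a*b+b}" by auto
  moreover have "(\<Sum>i\<in>{a*b..<a*b+b}. g (i div b)) = of_nat b * g a"
  proof -
    have "\<And>i. i \<in> {a*b..<a*b+b} \<Longrightarrow> i div b = a"
      using assms by (auto simp: div_nat_eqI mult.commute)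
    then have "(\<Sum>i\<in>{a*b..<a*b+b}. g (i div b)) = (\<Sum>i\<in>{a*b..<a*b+b}. g a)"
      by (intro sum.cong) auto
    then show ?thesis by simp
  qed
  ultimately show ?case using Suc
    by (simp add: sum.union_disjoint ivl_disj_int algebra_simps)
qed

lemma sum_pairs: "(\<Sum>p<2*(m::nat). g p) = (\<Sum>j<m. g (2*j) + g (2*j+1) :: real)"
  by (induction m) (auto simp: algebra_simps)

lemma mart_zero:
  fixes y :: "nat \<Rightarrow> nat \<Rightarrow> real"
  assumes mart: "\<And>j. j < 2^k \<Longrightarrow> 2 * y k j = y (Suc k) (2*j) + y (Suc k) (2*j+1)"
    and kN: "k < N"
  shows "(\<Sum>i<2^N. runmax (\<lambda>m. y m (i div 2^(N-m))) k *
            (y (Suc k) (i div 2^(N - Suc k)) - y k (i div 2^(N-k)))) = 0"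
proof -
  define H where "H j = runmax (\<lambda>m. y m (j div 2^(k-m))) k" for j
  define b :: nat where "b = 2^(N - Suc k)"
  define \<Phi> where "\<Phi> p = H (p div 2) * (y (Suc k) p - y k (p div 2))" for p
  have b0: "0 < b" by (simp add: b_def)
  have divk: "i div 2^(N-k) = i div b div 2" for i
  proof -
    have "(2::nat)^(N-k) = b * 2" using kN by (simp add: b_def Suc_diff_Suc[symmetric] power_Suc2 del: power_Suc)
    then show ?thesis by (simp add: div_mult2_eq)
  qed
  have rm: "runmax (\<lambda>m. y m (i div 2^(N-m))) k = H (i div 2^(N-k))" for i
    unfolding H_def
  proof (rule runmax_cong)
    fix m assume "m \<le> k"
    then have "(2::nat)^(N-m) = 2^(N-k) * 2^(k-m)" using kN by (simp add: power_add[symmetric])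
    then show "y m (i div 2 ^ (N - m)) = y m (i div 2 ^ (N - k) div 2 ^ (k - m))"
      by (simp add: div_mult2_eq)
  qed
  have "(\<Sum>i<2^N. runmax (\<lambda>m. y m (i div 2^(N-m))) k *
            (y (Suc k) (i div 2^(N - Suc k)) - y k (i div 2^(N-k)))) = (\<Sum>i<2^Suc k * b. \<Phi> (i div b))"
  proof -
    have "(2::nat)^N = 2^(Suc k + (N - Suc k))" using kN by simp
    then have "(2::nat)^N = 2^Suc k * b" unfolding b_def power_add by simp
    then show ?thesis by (simp add: rm divk \<Phi>_def b_def)
  qed
  also have "\<dots> = of_nat b * (\<Sum>p<2*2^k. \<Phi> p)" using sum_div_block[OF b0] by simp
  also have "(\<Sum>p<2*2^k. \<Phi> p) = (\<Sum>j<2^k. \<Phi> (2*j) + \<Phi> (2*j+1))" by (rule sum_pairs)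
  also have "\<dots> = (\<Sum>j<(2::nat)^k. (0::real))"
  proof (rule sum.cong)
    fix j assume "j \<in> {..<(2::nat)^k}"
    then have "2 * y k j = y (Suc k) (2*j) + y (Suc k) (2*j+1)" using mart by simp
    then show "\<Phi> (2*j) + \<Phi> (2*j+1) = 0" by (simp add: \<Phi>_def algebra_simps)
  qed simp
  finally show ?thesis by simp
qed

lemma doob_discrete:
  assumes mart: "\<And>k j. k < N \<Longrightarrow> j < 2^k \<Longrightarrow> 2 * y k j = y (Suc k) (2*j) + y (Suc k) (2*j+1)"
  shows "(\<Sum>i<2^N. (runmax (\<lambda>m. y m (i div 2^(N-m))) N)^2) \<le> 4 * (\<Sum>i<(2::nat)^N. (y N i)^2)"
proof -
  let ?P = "\<lambda>i m. y m (i div 2^(N-m))"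
  have "(\<Sum>i<2^N. (runmax (?P i) N)^2) \<le>
        (\<Sum>i<(2::nat)^N. 4 * (?P i N)^2 - 4 * (\<Sum>k<N. runmax (?P i) k * (?P i (Suc k) - ?P i k)))"
    by (intro sum_mono runmax_pathwise)
  also have "\<dots> = 4 * (\<Sum>i<(2::nat)^N. (y N i)^2) -
      4 * (\<Sum>k<N. \<Sum>i<(2::nat)^N. runmax (?P i) k * (?P i (Suc k) - ?P i k))"
    by (simp add: sum_subtractf sum_distrib_left sum.swap[of _ "{..<N}"])
  also have "(\<Sum>k<N. \<Sum>i<(2::nat)^N. runmax (?P i) k * (?P i (Suc k) - ?P i k)) = 0"
    by (intro sum.neutral ballI mart_zero mart) auto
  finally show ?thesis by simp
qed



definition DI :: "nat \<Rightarrow> nat \<Rightarrow> real set" where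
  "DI k j = {real j / 2^k ..< (real j + 1) / 2^k}"

definition Gf :: "(real \<Rightarrow> complex) \<Rightarrow> nat \<Rightarrow> nat \<Rightarrow> real" where
  "Gf f k j = (LINT t : DI k j | lborel. cmod (f t))"

definition Ff :: "(real \<Rightarrow> complex) \<Rightarrow> nat \<Rightarrow> nat \<Rightarrow> complex" where
  "Ff f k j = (LINT t : DI k j | lborel. f t)"

lemma DI_sets[measurable]: "DI k j \<in> sets lborel"
  by (simp add: DI_def)

lemma DI_sub: "j < 2^k \<Longrightarrow> DI k j \<subseteq> {0..<1}"
proof -
  assume "j < 2^k"
  then have "real j + 1 \<le> 2^k" by (metis Suc_leI of_nat_Suc of_nat_le_iff of_nat_numeral of_nat_power add.commute)
  then have "(real j + 1) / 2^k \<le> 1" by simp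
  show ?thesis
  proof
    fix x assume "x \<in> DI k j"
    then have a: "real j / 2^k \<le> x" "x < (real j + 1) / 2^k" unfolding DI_def by auto
    have "0 \<le> real j / 2^k" by simp
    then show "x \<in> {0..<1}" unfolding atLeastLessThan_iff using a \<open>(real j + 1) / 2^k \<le> 1\<close> by linarith
  qed
qed

lemma mem_DI: "x \<in> DI k j \<longleftrightarrow> 0 \<le> x \<and> \<lfloor>2^k * x\<rfloor> = int j"
proof -
  have "x \<in> DI k j \<longleftrightarrow> real j \<le> 2^k * x \<and> 2^k * x < real j + 1"
    unfolding DI_def by (auto simp: field_simps)
  also have "\<dots> \<longleftrightarrow> 0 \<le> x \<and> \<lfloor>2^k * x\<rfloor> = int j"
  proof
    assume a: "real j \<le> 2^k * x \<and> 2^k * x < real j + 1"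
    then have "0 \<le> 2^k * x" by (meson of_nat_0_le_iff order.trans)
    moreover have "(0::real) < 2^k" by simp
    ultimately have "0 \<le> x" using zero_le_mult_iff[of "2^k" x] by linarith
    then show "0 \<le> x \<and> \<lfloor>2^k * x\<rfloor> = int j" using a by (simp add: floor_eq_iff)
  next
    assume "0 \<le> x \<and> \<lfloor>2^k * x\<rfloor> = int j"
    then show "real j \<le> 2^k * x \<and> 2^k * x < real j + 1" by (simp add: floor_eq_iff)
  qed
  finally show ?thesis .
qed

lemma L2_set_integrable:
  assumes "in_L2 f"
  shows "set_integrable lborel {0..<1} f"
proof -
  have meas[measurable]: "f \<in> borel_measurable lborel" using assms by (simp add: in_L2_def)
  have fin: "L2sq f < \<infinity>" using assms by (simp add: in_L2_def)
  have "(\<integral>\<^sup>+ x. ennreal (norm (indicator {0..<1} x *\<^sub>R f x)) \<partial>lborel) \<le>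
        (\<integral>\<^sup>+ x. indicator {0..<1} x + ennreal ((cmod (f x))\<^sup>2) * indicator {0..<1} x \<partial>lborel)"
  proof (rule nn_integral_mono)
    fix x
    have s1: "0 \<le> (cmod (f x) - 1)\<^sup>2" by simp
    have s2: "0 \<le> (cmod (f x))\<^sup>2" by simp
    have "2 * cmod (f x) \<le> 1 + cmod (f x) * cmod (f x)"
      using s1 unfolding power2_eq_square by (simp add: algebra_simps)
    then have "cmod (f x) \<le> 1 + (cmod (f x))\<^sup>2"
      using norm_ge_zero[of "f x"] unfolding power2_eq_square by linarith
    then have "ennreal (cmod (f x)) \<le> ennreal (1 + (cmod (f x))\<^sup>2)"
      by (rule ennreal_leI)
    also have "\<dots> = 1 + ennreal ((cmod (f x))\<^sup>2)"
      by (subst ennreal_plus) auto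
    finally have "ennreal (cmod (f x)) \<le> 1 + ennreal ((cmod (f x))\<^sup>2)" .
    then show "ennreal (norm (indicator {0..<1} x *\<^sub>R f x)) \<le>
        indicator {0..<1} x + ennreal ((cmod (f x))\<^sup>2) * indicator {0..<1} x"
      by (cases "x \<in> {0..<1::real}") auto
  qed
  also have "\<dots> = emeasure lborel {0..<1::real} + L2sq f"
    by (subst nn_integral_add) (auto simp: L2sq_def)
  also have "\<dots> < \<infinity>" using fin by simp  
  finally have lt: "(\<integral>\<^sup>+ x. ennreal (norm (indicator {0..<1} x *\<^sub>R f x)) \<partial>lborel) < \<infinity>" .
  show ?thesis unfolding set_integrable_def
  proof (rule integrableI_bounded)
    show "(\<lambda>x. indicat_real {0..<1} x *\<^sub>R f x) \<in> borel_measurable lborel" by measurable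
  qed (rule lt)
qed

lemma DI_integrable:
  assumes "in_L2 f" "j < 2^k"
  shows "set_integrable lborel (DI k j) f"
  using set_integrable_subset[OF L2_set_integrable[OF assms(1)] DI_sets DI_sub[OF assms(2)]] .

lemma DI_split: "DI k j = DI (Suc k) (2*j) \<union> DI (Suc k) (2*j+1)"
  "DI (Suc k) (2*j) \<inter> DI (Suc k) (2*j+1) = {}"
  unfolding DI_def by (auto simp: field_simps)

lemma Gf_split:
  assumes "in_L2 f" "j < 2^k"
  shows "Gf f k j = Gf f (Suc k) (2*j) + Gf f (Suc k) (2*j+1)"
proof -
  have a: "2*j < 2^Suc k" "2*j+1 < 2^Suc k" using assms(2) by auto
  show ?thesis unfolding Gf_def
    by (subst DI_split(1), rule set_integral_Un[OF DI_split(2)])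
       (intro set_integrable_norm DI_integrable[OF assms(1)] a)+
qed

lemma Ff_le_Gf:
  assumes "in_L2 f" "j < 2^k"
  shows "cmod (Ff f k j) \<le> Gf f k j"
  unfolding Ff_def Gf_def by (rule set_integral_norm_bound[OF DI_integrable[OF assms]])

lemma Gf_nonneg: "0 \<le> Gf f k j"
  unfolding Gf_def set_lebesgue_integral_def by (intro integral_nonneg_AE) (auto simp: indicator_def)

lemma floor_anc:
  assumes "x \<in> DI N i" "k \<le> N"
  shows "\<lfloor>2^k * x\<rfloor> = int (i div 2^(N-k))"
proof -
  define d :: nat where "d = 2^(N-k)"
  define q where "q = i div d"
  have d0: "0 < d" by (simp add: d_def)
  have qd1: "q * d \<le> i" by (simp add: q_def)
  have qd2: "i + 1 \<le> (q+1) * d"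
  proof -
    have "i mod d < d" using d0 by simp
    moreover have "q * d + i mod d = i" unfolding q_def by simp
    ultimately show ?thesis by (simp add: algebra_simps)
  qed
  have "(2::real)^N = 2^(k + (N-k))" using assms(2) by simp
  then have pw: "(2::real)^N = 2^k * real d"
    unfolding power_add d_def by simp
  have x: "real i \<le> 2^N * x" "2^N * x < real i + 1"
    using assms(1) unfolding DI_def by (auto simp: field_simps)
  have r1: "real q * real d \<le> real i" using qd1
    by (simp only: of_nat_mult[symmetric] of_nat_le_iff)
  have "real (i + 1) \<le> real ((q+1) * d)" using qd2 by (simp only: of_nat_le_iff)
  then have r2: "real i + 1 \<le> (real q + 1) * real d" by (simp add: algebra_simps)
  have "real q * real d \<le> (2^k * x) * real d" using r1 x pw by (simp add: algebra_simps)
  then have a: "real q \<le> 2^k * x" using d0 by simp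
  have "(2^k * x) * real d < (real q + 1) * real d" using r2 x pw by (simp add: algebra_simps)
  then have b: "2^k * x < real q + 1" using d0 by simp
  show ?thesis unfolding d_def[symmetric] q_def[symmetric] using a b by (simp add: floor_eq_iff)
qed

lemma cond_exp_eq:
  assumes "x \<in> DI N i" "k \<le> N"
  shows "dyadic_cond_exp k f x = 2^k * Ff f k (i div 2^(N-k))"
  unfolding dyadic_cond_exp_def dyadic_interval_def Ff_def DI_def floor_anc[OF assms] by simp

lemma indicator_decomp:
  "(indicator {0..<1} x :: ennreal) = (\<Sum>i<(2::nat)^N. indicator (DI N i) x)"
proof (cases "0 \<le> x")
  case False
  then have "\<And>i. x \<notin> DI N i" by (simp add: mem_DI)
  then show ?thesis using False by simp
next
  case True
  define i0 where "i0 = nat \<lfloor>2^N * x\<rfloor>"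
  have fl: "\<lfloor>2^N * x\<rfloor> = int i0" using True unfolding i0_def by simp
  have "(\<Sum>i<(2::nat)^N. indicator (DI N i) x :: ennreal) = (\<Sum>i<(2::nat)^N. if i = i0 then 1 else 0)"
    by (intro sum.cong) (auto simp: mem_DI True fl indicator_def)
  also have "\<dots> = (if i0 < 2^N then 1 else 0)" by simp
  also have "(i0 < 2^N) \<longleftrightarrow> x < 1"
  proof
    assume "i0 < 2^N"
    then have "x \<in> DI N i0" using True fl by (simp add: mem_DI)
    then show "x < 1" using DI_sub[OF \<open>i0 < 2^N\<close>] by auto
  next
    assume "x < 1"
    then have "2^N * x < 2^N" by simp
    then have "\<lfloor>2^N * x\<rfloor> < 2^N" by (metis floor_less_iff of_int_numeral of_int_power)
    then have "int i0 < int (2^N)" using fl by simp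
    then show "i0 < 2^N" by linarith
  qed
  finally show ?thesis using True by (simp add: indicator_def)
qed

lemma nn_decomp:
  assumes [measurable]: "g \<in> borel_measurable lborel"
  shows "(\<integral>\<^sup>+ x \<in> {0..<1}. g x \<partial>lborel) = (\<Sum>i<(2::nat)^N. \<integral>\<^sup>+ x \<in> DI N i. g x \<partial>lborel)"
proof -
  have "(\<integral>\<^sup>+ x \<in> {0..<1}. g x \<partial>lborel) = (\<integral>\<^sup>+ x. (\<Sum>i<(2::nat)^N. g x * indicator (DI N i) x) \<partial>lborel)"
    by (intro nn_integral_cong) (simp add: indicator_decomp[of _ N] sum_distrib_left)
  also have "\<dots> = (\<Sum>i<(2::nat)^N. \<integral>\<^sup>+ x \<in> DI N i. g x \<partial>lborel)"
    by (intro nn_integral_sum) measurable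
  finally show ?thesis .
qed



lemma L2_lower:
  assumes L2: "in_L2 f" and i: "i < 2^N"
  shows "ennreal (2^N * (Gf f N i)^2) \<le> (\<integral>\<^sup>+ x \<in> DI N i. ennreal ((cmod (f x))^2) \<partial>lborel)"
proof -
  have meas[measurable]: "f \<in> borel_measurable lborel" using L2 by (simp add: in_L2_def)
  have fin: "L2sq f < \<infinity>" using L2 by (simp add: in_L2_def)
  define I where "I = DI N i"
  have I_sets[measurable]: "I \<in> sets lborel" unfolding I_def by (rule DI_sets)
  have Isub: "I \<subseteq> {0..<1}" using DI_sub[OF i] by (simp add: I_def)
  define g where "g x = (cmod (f x))^2" for x
  have g_meas[measurable]: "g \<in> borel_measurable lborel" unfolding g_def by measurable
  have nn_eq: "(\<integral>\<^sup>+ x \<in> I. ennreal (g x) \<partial>lborel) = (\<integral>\<^sup>+ x. ennreal (norm (indicator I x *\<^sub>R g x)) \<partial>lborel)"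
    by (intro nn_integral_cong) (auto simp: indicator_def g_def)
  have "(\<integral>\<^sup>+ x \<in> I. ennreal (g x) \<partial>lborel) \<le> L2sq f"
    unfolding L2sq_def g_def using Isub
    by (intro nn_integral_mono) (auto simp: indicator_def)
  then have lt: "(\<integral>\<^sup>+ x. ennreal (norm (indicator I x *\<^sub>R g x)) \<partial>lborel) < \<infinity>"
    using fin nn_eq by simp
  have int_g: "set_integrable lborel I g" unfolding set_integrable_def
  proof (rule integrableI_bounded)
    show "(\<lambda>x. indicat_real I x *\<^sub>R g x) \<in> borel_measurable lborel" by measurable
  qed (rule lt)
  have int_n: "set_integrable lborel I (\<lambda>x. cmod (f x))"
    unfolding I_def by (intro set_integrable_norm DI_integrable[OF L2 i])
  have mI: "measure lborel I = 1 / 2^N"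
  proof -
    have "(real i + 1) / 2^N - real i / 2^N = 1 / 2^N" by (simp add: field_simps)
    moreover have "real i / 2^N \<le> (real i + 1) / 2^N" by (simp add: field_simps)
    ultimately show ?thesis unfolding I_def DI_def measure_def by (simp add: emeasure_lborel_Ico)
  qed
  have eI: "emeasure lborel I < \<infinity>"
  proof -
    have "real i / 2^N \<le> (real i + 1) / 2^N" by (simp add: field_simps)
    then show ?thesis unfolding I_def DI_def by (simp add: emeasure_lborel_Ico)
  qed
  define G where "G = Gf f N i"
  have G_eq: "G = (LINT x:I|lborel. cmod (f x))" by (simp add: G_def Gf_def I_def)
  define c :: real where "c = 2^N * G"
  have int_c: "set_integrable lborel I (\<lambda>x. c^2)"
    unfolding set_integrable_def
    using integrable_scaleR_left[OF integrable_real_indicator[OF I_sets eI], of "c^2"] by simp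
  have int_cn: "set_integrable lborel I (\<lambda>x. 2 * c * cmod (f x))"
    using int_n by simp
  have "0 \<le> (LINT x:I|lborel. (cmod (f x) - c)^2)"
    unfolding set_lebesgue_integral_def by (intro integral_nonneg_AE) auto
  also have "(LINT x:I|lborel. (cmod (f x) - c)^2) = (LINT x:I|lborel. (g x - 2 * c * cmod (f x)) + c^2)"
    by (intro set_lebesgue_integral_cong[OF I_sets]) (auto simp: g_def power2_eq_square algebra_simps)
  also have "\<dots> = (LINT x:I|lborel. g x) - 2 * c * G + c^2 * (1 / 2^N)"
  proof -
    have "(LINT x:I|lborel. (g x - 2 * c * cmod (f x)) + c^2) =
          (LINT x:I|lborel. g x - 2 * c * cmod (f x)) + (LINT x:I|lborel. c^2)"
      by (rule set_integral_add(2)) (auto intro: int_g int_cn int_c)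
    also have "(LINT x:I|lborel. g x - 2 * c * cmod (f x)) = (LINT x:I|lborel. g x) - (LINT x:I|lborel. 2 * c * cmod (f x))"
      by (rule set_integral_diff(2)[OF int_g int_cn])
    also have "(LINT x:I|lborel. 2 * c * cmod (f x)) = 2 * c * G"
      unfolding G_eq by (rule set_integral_mult_right)
    also have "(LINT x:I|lborel. c^2) = c^2 * (1 / 2^N)"
      using set_integral_const[OF I_sets, of "c^2"] eI mI by simp
    finally show ?thesis .
  qed
  finally have "2^N * G^2 \<le> (LINT x:I|lborel. g x)"
    unfolding c_def by (simp add: power2_eq_square field_simps)
  then have "ennreal (2^N * G^2) \<le> ennreal (LINT x:I|lborel. g x)" by (rule ennreal_leI)
  also have "ennreal (LINT x:I|lborel. g x) = (\<integral>\<^sup>+ x \<in> I. ennreal (g x) \<partial>lborel)"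
  proof -
    have "(\<integral>\<^sup>+ x \<in> I. ennreal (g x) \<partial>lborel) = (\<integral>\<^sup>+ x. ennreal (indicator I x *\<^sub>R g x) \<partial>lborel)"
      by (intro nn_integral_cong) (auto simp: indicator_def)
    also have "\<dots> = ennreal (LINT x:I|lborel. g x)"
      unfolding set_lebesgue_integral_def using int_g unfolding set_integrable_def
      by (intro nn_integral_eq_integral) (auto simp: g_def)
    finally show ?thesis by simp
  qed
  finally show ?thesis by (simp add: G_def I_def g_def)
qed



lemma abel_sum:
  fixes e E :: "nat \<Rightarrow> complex"
  shows "(\<Sum>k=0..N. (e k - e (Suc k)) * E k) =
         e 0 * E 0 - e (Suc N) * E N + (\<Sum>k=1..N. e k * (E k - E (k-1)))"
proof (induction N)
  case 0 then show ?case by (simp add: algebra_simps)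
next
  case (Suc N)
  have "(\<Sum>k=0..Suc N. (e k - e (Suc k)) * E k) = (\<Sum>k=0..N. (e k - e (Suc k)) * E k) + (e (Suc N) - e (Suc (Suc N))) * E (Suc N)"
    by simp
  moreover have "(\<Sum>k=1..Suc N. e k * (E k - E (k-1))) = (\<Sum>k=1..N. e k * (E k - E (k-1))) + e (Suc N) * (E (Suc N) - E N)"
    by simp
  ultimately show ?case using Suc by (simp add: algebra_simps)
qed

lemma pointwise_bound:
  fixes a :: "nat \<Rightarrow> nat \<Rightarrow> complex"
  assumes L2: "in_L2 f" and x: "x \<in> DI N i" and i: "i < 2^N" and M: "1 \<le> M"
  defines "R \<equiv> runmax (\<lambda>m. 2^m * Gf f m (i div 2^(N-m))) N"
  defines "V \<equiv> (MAX j \<in> {1..M}. \<Sum>k = 0..N. cmod (ext_entry N a j k - ext_entry N a j (k + 1)))"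
  shows "max_transform M N a f x \<le> V * R" "0 \<le> max_transform M N a f x"
proof -
  have R0: "0 \<le> R"
  proof -
    have "2^0 * Gf f 0 (i div 2^(N-0)) \<le> R" unfolding R_def
      by (rule runmax_ge[where x = "\<lambda>m. 2^m * Gf f m (i div 2^(N-m))"]) simp
    then show ?thesis using Gf_nonneg[of f 0 "i div 2^N"] by simp
  qed
  define E where "E k = dyadic_cond_exp k f x" for k
  have hE: "cmod (E k) \<le> R" if k: "k \<le> N" for k
  proof -
    have "i < 2^k * 2^(N-k)" using i k by (simp add: power_add[symmetric])
    then have q: "i div 2^(N-k) < 2^k" by (simp add: less_mult_imp_div_less)
    have "cmod (E k) = 2^k * cmod (Ff f k (i div 2^(N-k)))"
      unfolding E_def cond_exp_eq[OF x k] by (simp add: norm_mult norm_power)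
    also have "\<dots> \<le> 2^k * Gf f k (i div 2^(N-k))"
      using Ff_le_Gf[OF L2 q] by simp
    also have "\<dots> \<le> R" unfolding R_def
      by (rule runmax_ge[where x = "\<lambda>m. 2^m * Gf f m (i div 2^(N-m))"]) (rule k)
    finally show ?thesis .
  qed
  have fin: "finite {1..M}" and ne: "{1..M} \<noteq> {}" using M by auto
  have each: "cmod (\<Sum>k = 1..N. a j k * dyadic_diff k f x) \<le> V * R" if j: "j \<in> {1..M}" for j
  proof -
    define e where "e = ext_entry N a j"
    have "(\<Sum>k=0..N. (e k - e (Suc k)) * E k) = (\<Sum>k=1..N. e k * (E k - E (k-1)))"
      using abel_sum[of e E N] by (simp add: e_def ext_entry_def)
    also have "\<dots> = (\<Sum>k = 1..N. a j k * dyadic_diff k f x)"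
      by (intro sum.cong) (auto simp: e_def ext_entry_def E_def dyadic_diff_def)
    finally have eq: "(\<Sum>k = 1..N. a j k * dyadic_diff k f x) = (\<Sum>k=0..N. (e k - e (Suc k)) * E k)" by simp
    have "cmod (\<Sum>k=0..N. (e k - e (Suc k)) * E k) \<le> (\<Sum>k=0..N. cmod ((e k - e (Suc k)) * E k))"
      by (rule norm_sum)
    also have "\<dots> \<le> (\<Sum>k=0..N. cmod (e k - e (Suc k)) * R)"
      by (intro sum_mono) (auto simp: norm_mult intro: mult_left_mono hE)
    also have "\<dots> = (\<Sum>k=0..N. cmod (e k - e (Suc k))) * R" by (simp add: sum_distrib_right)
    also have "\<dots> \<le> V * R"
    proof (rule mult_right_mono[OF _ R0])
      show "(\<Sum>k=0..N. cmod (e k - e (Suc k))) \<le> V"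
        unfolding V_def e_def using fin j by (intro Max_ge) auto
    qed
    finally show ?thesis using eq by simp
  qed
  show "max_transform M N a f x \<le> V * R"
    unfolding max_transform_def using fin ne each by (simp add: Max_le_iff)
  have "1 \<in> {1..M}" using M by simp
  then show "0 \<le> max_transform M N a f x"
    unfolding max_transform_def using fin by (meson Max_ge finite_imageI imageI norm_ge_zero order.trans)
qed



lemma main_bound:
  fixes a :: "nat \<Rightarrow> nat \<Rightarrow> complex" and N M :: nat
  assumes L2: "in_L2 f" and M: "1 \<le> M"
  defines "V \<equiv> (MAX j \<in> {1..M}. \<Sum>k = 0..N. cmod (ext_entry N a j k - ext_entry N a j (k + 1)))"
  shows "L2sq (\<lambda>x. complex_of_real (max_transform M N a f x)) \<le> ennreal ((2 * V)^2) * L2sq f"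
proof -
  have meas[measurable]: "f \<in> borel_measurable lborel" using L2 by (simp add: in_L2_def)
  define y where "y m j = 2^m * Gf f m j" for m j
  define R where "R i = runmax (\<lambda>m. y m (i div 2^(N-m))) N" for i
  define mt where "mt x = max_transform M N a f x" for x
  have pb: "mt x \<le> V * R i" "0 \<le> mt x" if "x \<in> DI N i" "i < 2^N" for x i
    using pointwise_bound[OF L2 that M, of a] unfolding R_def y_def V_def mt_def by auto
  have sumeq: "(\<Sum>i<(2::nat)^N. ennreal (2^N * (Gf f N i)^2)) = ennreal (\<Sum>i<(2::nat)^N. 2^N * (Gf f N i)^2)"
    by (rule sum_ennreal) simp
  have "L2sq (\<lambda>x. complex_of_real (mt x)) \<le>
        (\<integral>\<^sup>+ x. (\<Sum>i<(2::nat)^N. ennreal ((V * R i)^2) * indicator (DI N i) x) \<partial>lborel)"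
    unfolding L2sq_def
  proof (rule nn_integral_mono)
    fix x
    have "ennreal ((cmod (complex_of_real (mt x)))\<^sup>2) * indicator {0..<1} x =
          (\<Sum>i<(2::nat)^N. ennreal ((cmod (complex_of_real (mt x)))\<^sup>2) * indicator (DI N i) x)"
      by (simp add: indicator_decomp[of x N] sum_distrib_left)
    also have "\<dots> \<le> (\<Sum>i<(2::nat)^N. ennreal ((V * R i)^2) * indicator (DI N i) x)"
    proof (rule sum_mono)
      fix i assume "i \<in> {..<(2::nat)^N}"
      then have i: "i < 2^N" by simp
      show "ennreal ((cmod (complex_of_real (mt x)))\<^sup>2) * indicator (DI N i) x \<le> ennreal ((V * R i)^2) * indicator (DI N i) x"
      proof (cases "x \<in> DI N i")
        case True
        have "(cmod (complex_of_real (mt x)))\<^sup>2 = (mt x)^2" by simp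
        also have "\<dots> \<le> (V * R i)^2" using pb[OF True i] by (intro power_mono) auto
        finally show ?thesis using True by (simp add: ennreal_leI)
      qed simp
    qed
    finally show "ennreal ((cmod (complex_of_real (mt x)))\<^sup>2) * indicator {0..<1} x
       \<le> (\<Sum>i<(2::nat)^N. ennreal ((V * R i)^2) * indicator (DI N i) x)" .
  qed
  also have "\<dots> = (\<Sum>i<(2::nat)^N. \<integral>\<^sup>+ x. ennreal ((V * R i)^2) * indicator (DI N i) x \<partial>lborel)"
    by (intro nn_integral_sum) measurable
  also have "\<dots> = (\<Sum>i<(2::nat)^N. ennreal ((V * R i)^2 / 2^N))"
  proof (rule sum.cong[OF refl])
    fix i :: nat
    have le: "real i / 2^N \<le> (real i + 1) / 2^N" by (simp add: field_simps)
    have "(real i + 1) / 2^N - real i / 2^N = 1 / 2^N" by (simp add: field_simps)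
    then have em: "emeasure lborel (DI N i) = ennreal (1 / 2^N)"
      unfolding DI_def using le by (simp add: emeasure_lborel_Ico)
    show "(\<integral>\<^sup>+ x. ennreal ((V * R i)^2) * indicator (DI N i) x \<partial>lborel) = ennreal ((V * R i)^2 / 2^N)"
      using nn_integral_cmult_indicator[OF DI_sets, of "ennreal ((V * R i)^2)" N i] em
      by (simp add: ennreal_mult'' divide_inverse)
  qed
  also have "\<dots> = ennreal (\<Sum>i<(2::nat)^N. (V * R i)^2 / 2^N)"
    by (rule sum_ennreal) simp
  also have "\<dots> \<le> ennreal ((2 * V)^2 * (\<Sum>i<(2::nat)^N. 2^N * (Gf f N i)^2))"
  proof (rule ennreal_leI)
    have mart: "2 * y k j = y (Suc k) (2*j) + y (Suc k) (2*j+1)" if "k < N" "j < 2^k" for k j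
      using Gf_split[OF L2 that(2)] unfolding y_def by (simp add: algebra_simps)
    have doob: "(\<Sum>i<(2::nat)^N. (R i)^2) \<le> 4 * (\<Sum>i<(2::nat)^N. (y N i)^2)"
      unfolding R_def by (rule doob_discrete) (rule mart)
    have "(\<Sum>i<(2::nat)^N. (V * R i)^2 / 2^N) = V^2 / 2^N * (\<Sum>i<(2::nat)^N. (R i)^2)"
      by (simp add: sum_distrib_left power_mult_distrib)
    also have "\<dots> \<le> V^2 / 2^N * (4 * (\<Sum>i<(2::nat)^N. (y N i)^2))"
      by (rule mult_left_mono[OF doob]) simp
    also have "\<dots> = (2 * V)^2 * (\<Sum>i<(2::nat)^N. 2^N * (Gf f N i)^2)"
    proof -
      have "(y N i)^2 = 2^N * (2^N * (Gf f N i)^2)" for i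
        by (simp add: y_def power_mult_distrib power2_eq_square)
      then show ?thesis by (simp add: sum_distrib_left power_mult_distrib mult_ac)
    qed
    finally show "(\<Sum>i<(2::nat)^N. (V * R i)^2 / 2^N) \<le> (2 * V)^2 * (\<Sum>i<(2::nat)^N. 2^N * (Gf f N i)^2)" .
  qed
  also have "\<dots> = ennreal ((2 * V)^2) * (\<Sum>i<(2::nat)^N. ennreal (2^N * (Gf f N i)^2))"
    unfolding sumeq by (rule ennreal_mult') simp
  also have "\<dots> \<le> ennreal ((2 * V)^2) * (\<Sum>i<(2::nat)^N. \<integral>\<^sup>+ x \<in> DI N i. ennreal ((cmod (f x))^2) \<partial>lborel)"
    by (intro mult_left_mono sum_mono L2_lower[OF L2]) auto
  also have "(\<Sum>i<(2::nat)^N. \<integral>\<^sup>+ x \<in> DI N i. ennreal ((cmod (f x))^2) \<partial>lborel) = L2sq f"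
    unfolding L2sq_def by (rule nn_decomp[symmetric]) measurable
  finally show ?thesis unfolding mt_def .
qed

theorem proposition3p1:
  "\<exists>C::real. \<forall>(M::nat) (N::nat) (a::nat \<Rightarrow> nat \<Rightarrow> complex). 1 \<le> M \<longrightarrow>
     h_const M N a \<le>
       ereal (C * (MAX j \<in> {1..M}. \<Sum>k = 0..N. cmod (ext_entry N a j k - ext_entry N a j (k + 1))))"
proof (intro exI allI impI)
  fix M N :: nat and a :: "nat \<Rightarrow> nat \<Rightarrow> complex"
  assume M: "1 \<le> M"
  define V where "V = (MAX j \<in> {1..M}. \<Sum>k = 0..N. cmod (ext_entry N a j k - ext_entry N a j (k + 1)))"
  have V0: "0 \<le> V"
  proof -
    have "1 \<in> {1..M}" using M by simp
    then have "(\<Sum>k = 0..N. cmod (ext_entry N a 1 k - ext_entry N a 1 (k + 1))) \<le> V"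
      unfolding V_def by (intro Max_ge) auto
    moreover have "0 \<le> (\<Sum>k = 0..N. cmod (ext_entry N a 1 k - ext_entry N a 1 (k + 1)))"
      by (intro sum_nonneg) auto
    ultimately show ?thesis by linarith
  qed
  have "ereal (2 * V) \<in> {ereal c | c. c \<ge> 0 \<and>
     (\<forall>f. in_L2 f \<longrightarrow>
        L2sq (\<lambda>x. complex_of_real (max_transform M N a f x)) \<le> ennreal (c\<^sup>2) * L2sq f)}"
    using V0 main_bound[OF _ M, of _ N a] unfolding V_def by auto
  then show "h_const M N a \<le> ereal (2 * V)"
    unfolding h_const_def by (rule Inf_lower)
qed


end
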